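(* Let $N\ge 2$ be an integer and index rows and columns of $N\times N$ matrices by $0,1,\dots,N-1$. Let $H$ be the complex symmetric tridiagonal $N\times N$ matrix with diagonal entries $H_{n,n}={\rm i}\,(2n-N+1)$ for $n=0,\dots,N-1$ and off-diagonal entries $H_{n-1,n}=H_{n,n-1}=\sqrt{n(N-n)}$ for $n=1,\dots,N-1$ (all other entries zero). Let $J$ be the $N\times N$ nilpotent Jordan block, $J_{n,n+1}=1$ for $n=0,\dots,N-2$ and all other entries zero. Define the diagonal matrices $D$, $G$ and the matrix $P$ by $$D_{n,n}={\rm i}^n\sqrt{\binom{N-1}{n}},\qquad G_{n,n}=(-{\rm i})^{N-n-1}\,(N-1-n)!,\qquad P_{m,q}=\binom{N-1-m}{q}\quad (n,m,q=0,\dots,N-1),$$ with the convention $\binom{a}{b}=0$ for $b>a$. Then $Q:=D\,P\,G$ is invertible and satisfies $H\,Q=Q\,J$, i.e. $Q^{-1}HQ=J$.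
   Context: $H$ is the Bose–Hubbard Hamiltonian $H^{(N)}_{(BH)}(z)$ evaluated at its exceptional point $z=1$; $Q$ is called the transition matrix (it brings $H$ to the Jordan block with eigenvalue $0$). *)

theory Defs
  imports "Jordan_Normal_Form.Matrix"
begin

definition BH_H :: "nat \<Rightarrow> complex mat" where
  "BH_H N = mat N N (\<lambda>(r, c).
     if r = c then \<i> * (2 * of_nat r - of_nat N + 1)
     else if r + 1 = c then complex_of_real (sqrt (real (c * (N - c))))
     else if c + 1 = r then complex_of_real (sqrt (real (r * (N - r))))
     else 0)"

definition jordan_J :: "nat \<Rightarrow> complex mat" where
  "jordan_J N = mat N N (\<lambda>(r, c). if c = r + 1 then 1 else 0)"

definition BH_D :: "nat \<Rightarrow> complex mat" where
  "BH_D N = mat N N (\<lambda>(r, c). if r = c then \<i> ^ r * complex_of_real (sqrt (real ((N - 1) choose r))) else 0)"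

definition BH_G :: "nat \<Rightarrow> complex mat" where
  "BH_G N = mat N N (\<lambda>(r, c). if r = c then (- \<i>) ^ (N - r - 1) * of_nat (fact (N - 1 - r)) else 0)"

text \<open>Note: nat binomial is 0 when q > N-1-m, matching the paper's convention.\<close>
definition BH_P :: "nat \<Rightarrow> complex mat" where
  "BH_P N = mat N N (\<lambda>(m, q). of_nat ((N - 1 - m) choose q))"

definition BH_Q :: "nat \<Rightarrow> complex mat" where
  "BH_Q N = BH_D N * BH_P N * BH_G N"

end

theory Submission imports Defs "Jordan_Normal_Form.Determinant" begin
lemma binom_fact1: "Suc k * (n choose Suc k) = (n - k) * (n choose k)"
  by (metis binomial_absorb_comp binomial_absorption)
lemma binom_A: "k * ((k-1) choose Suc b) + Suc b * (k choose Suc b) = k * (k choose Suc b)"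
proof (cases "Suc b \<le> k")
  case True
  have "k * ((k-1) choose Suc b) = (k - Suc b) * (k choose Suc b)" by (metis binomial_absorb_comp)
  moreover have "Suc b * (k choose Suc b) \<le> k * (k choose Suc b)" using True by (rule mult_le_mono1)
  ultimately show ?thesis by (simp add: diff_mult_distrib)
next
  case False
  then show ?thesis by (simp add: binomial_eq_0)
qed
lemma binom_B: "Suc b * (k choose Suc b) + b * (k choose b) = k * (k choose b)"
proof (cases "b \<le> k")
  case True
  then show ?thesis using binom_fact1[of b k] by (simp add: diff_mult_distrib)
next
  case False
  then show ?thesis by (simp add: binomial_eq_0)
qed
lemma alg_aux:
  fixes a k c X Y Z :: complex
  assumes "k * Z + (1 + c) * Y = k * Y" "(1 + c) * Y + c * X = k * X"
  shows "a * (-\<i>) * (X + Y) + \<i> * (2 * a - (a + k)) * Y + k * \<i> * Z = - \<i> * (a + k - c) * X"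
proof -
  have "a * (-\<i>) * (X + Y) + \<i> * (2 * a - (a + k)) * Y + k * \<i> * Z - (- \<i> * (a + k - c) * X)
     = \<i> * ((k * Z + (1 + c) * Y - k * Y) - ((1 + c) * Y + c * X - k * X))"
    by (simp add: algebra_simps)
  also have "\<dots> = 0" using assms by simp
  finally show ?thesis by (simp only: right_minus_eq)
qed
lemma core:
  fixes a k b :: nat
  assumes "b \<le> a + k"
  shows "of_nat a * (-\<i>) * of_nat ((k+1) choose b)
     + \<i>*(2*of_nat a - of_nat (a+k)) * of_nat (k choose b)
     + of_nat k * \<i> * of_nat ((k-1) choose b)
   = (if 0<b then -\<i> * of_nat (a+k+1-b) * of_nat (k choose (b-1)) else (0::complex))"
proof (cases b)
  case 0
  then show ?thesis by (cases k; simp add: algebra_simps)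
next
  case (Suc c)
  have A: "of_nat k * of_nat ((k-1) choose Suc c) + (1 + of_nat c) * of_nat (k choose Suc c) = (of_nat k * of_nat (k choose Suc c) :: complex)"
    using binom_A[of k c] by (metis of_nat_add of_nat_mult of_nat_Suc add.commute)
  have B: "(1 + of_nat c) * of_nat (k choose Suc c) + of_nat c * of_nat (k choose c) = (of_nat k * of_nat (k choose c) :: complex)"
    using binom_B[of c k] by (metis of_nat_add of_nat_mult of_nat_Suc add.commute)
  have C: "of_nat ((k+1) choose Suc c) = (of_nat (k choose c) + of_nat (k choose Suc c) :: complex)" by simp
  have D: "(of_nat (a+k-c) :: complex) = of_nat a + of_nat k - of_nat c" using assms Suc by (simp add: of_nat_diff)
  show ?thesis using alg_aux[OF A B, of "of_nat a"] by (simp add: D Suc)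
qed

lemma mult_diag_right:
  fixes A :: "'a::comm_ring_1 mat"
  assumes "A \<in> carrier_mat n N" "i < n" "j < N"
  shows "(A * mat N N (\<lambda>(r,c). if r = c then d r else 0)) $$ (i,j) = A $$ (i,j) * d j"
  using assms by (simp add: scalar_prod_def if_distrib[of "\<lambda>x. _ * x"] cong: if_cong)
lemma mult_diag_left:
  fixes A :: "'a::comm_ring_1 mat"
  assumes "A \<in> carrier_mat N n" "i < N" "j < n"
  shows "(mat N N (\<lambda>(r,c). if r = c then d r else 0) * A) $$ (i,j) = d i * A $$ (i,j)"
  using assms by (simp add: scalar_prod_def if_distrib[of "\<lambda>x. x * _"] cong: if_cong)

lemma carriers: "BH_H N \<in> carrier_mat N N" "BH_D N \<in> carrier_mat N N" "BH_G N \<in> carrier_mat N N"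
  "BH_P N \<in> carrier_mat N N" "jordan_J N \<in> carrier_mat N N" "BH_Q N \<in> carrier_mat N N"
  by (auto simp: BH_H_def BH_D_def BH_G_def BH_P_def jordan_J_def BH_Q_def)

lemma dims: "dim_row (BH_H N) = N" "dim_col (BH_H N) = N" "dim_row (BH_Q N) = N" "dim_col (BH_Q N) = N"
  "dim_row (jordan_J N) = N" "dim_col (jordan_J N) = N"
  using carriers[of N] by auto

lemma Q_entry:
  assumes "i < N" "j < N"
  shows "BH_Q N $$ (i,j) = \<i>^i * complex_of_real (sqrt (real ((N-1) choose i))) * of_nat ((N-1-i) choose j)
     * ((- \<i>)^(N-j-1) * of_nat (fact (N-1-j)))"
proof -
  have "BH_Q N $$ (i,j) = (BH_D N * BH_P N) $$ (i,j) * ((- \<i>)^(N-j-1) * of_nat (fact (N-1-j)))"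
    unfolding BH_Q_def BH_G_def using assms
    by (subst mult_diag_right[where n=N]) (auto simp: mult_carrier_mat[OF carriers(2) carriers(4)])
  also have "(BH_D N * BH_P N) $$ (i,j) = \<i>^i * complex_of_real (sqrt (real ((N-1) choose i))) * of_nat ((N-1-i) choose j)"
    unfolding BH_D_def using assms
    by (subst mult_diag_left[where n=N]) (auto simp: carriers BH_P_def)
  finally show ?thesis .
qed

lemma sqrt_L:
  assumes "0 < a" "a \<le> n"
  shows "sqrt (real (n choose (a-1))) * sqrt (real (a * (Suc n - a))) = real a * sqrt (real (n choose a))"
proof -
  obtain a' where a: "a = Suc a'" using assms by (cases a) auto
  have h: "Suc a' * (n choose Suc a') = (n - a') * (n choose a')" by (rule binom_fact1)
  have "Suc a' * Suc a' * (n choose Suc a') = Suc a' * (Suc a' * (n choose Suc a'))" by (simp only: mult.assoc)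
  also have "\<dots> = Suc a' * ((n - a') * (n choose a'))" by (simp only: h)
  also have "\<dots> = (n choose a') * (Suc a' * (n - a'))" by (simp only: ac_simps)
  finally have e: "(n choose a') * (Suc a' * (n - a')) = Suc a' * Suc a' * (n choose Suc a')" by (rule sym)
  have "real (n choose (a-1)) * real (a * (Suc n - a)) = real ((n choose a') * (Suc a' * (n - a')))"
    unfolding a by (simp only: of_nat_mult diff_Suc_Suc diff_Suc_1)
  also have "\<dots> = real a ^ 2 * real (n choose a)" unfolding e a by (simp only: of_nat_mult power2_eq_square)
  finally have "real (n choose (a-1)) * real (a * (Suc n - a)) = real a ^ 2 * real (n choose a)" .
  then have "sqrt (real (n choose (a-1)) * real (a * (Suc n - a))) = sqrt (real a ^ 2 * real (n choose a))" by (rule arg_cong)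
  then show ?thesis by (simp only: real_sqrt_mult real_sqrt_abs abs_of_nat)
qed

lemma sqrt_U:
  assumes "a < n"
  shows "sqrt (real (n choose Suc a)) * sqrt (real (Suc a * (Suc n - Suc a))) = real (n - a) * sqrt (real (n choose a))"
proof -
  have h: "Suc a * (n choose Suc a) = (n - a) * (n choose a)" by (rule binom_fact1)
  have "(n choose Suc a) * (Suc a * (n - a)) = (n - a) * (Suc a * (n choose Suc a))" by (simp only: ac_simps)
  also have "\<dots> = (n - a) * ((n - a) * (n choose a))" by (simp only: h)
  finally have e: "(n choose Suc a) * (Suc a * (n - a)) = (n - a) * (n - a) * (n choose a)" by (simp only: mult.assoc)
  have "real (n choose Suc a) * real (Suc a * (Suc n - Suc a)) = real ((n choose Suc a) * (Suc a * (n - a)))"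
    by (simp only: of_nat_mult diff_Suc_Suc)
  also have "\<dots> = real (n - a) ^ 2 * real (n choose a)" unfolding e by (simp only: of_nat_mult power2_eq_square)
  finally have "real (n choose Suc a) * real (Suc a * (Suc n - Suc a)) = real (n - a) ^ 2 * real (n choose a)" .
  then have "sqrt (real (n choose Suc a) * real (Suc a * (Suc n - Suc a))) = sqrt (real (n - a) ^ 2 * real (n choose a))" by (rule arg_cong)
  then show ?thesis by (simp only: real_sqrt_mult real_sqrt_abs abs_of_nat)
qed


lemma sum_pred: "(\<Sum>k\<in>{0..<(N::nat)}. if k+1=a then f k else (0::'a::comm_monoid_add)) = (if 0<a \<and> a \<le> N then f (a-1) else 0)"
proof (cases a)
  case 0 then show ?thesis by simp
next
  case (Suc a')
  have "(\<Sum>k\<in>{0..<N}. if k+1=a then f k else 0) = (\<Sum>k\<in>{0..<N}. if k=a' then f k else 0)"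
    using Suc by (intro sum.cong) auto
  then show ?thesis using Suc by simp
qed

lemma sum_pred': "(\<Sum>k\<in>{0..<(N::nat)}. if Suc k=a then f k else (0::'a::comm_monoid_add)) = (if 0<a \<and> a \<le> N then f (a-1) else 0)"
  using sum_pred[where N=N and a=a and f=f] by simp

lemma sum_succ: "(\<Sum>k\<in>{0..<(N::nat)}. if a+1=k then f k else (0::'a::comm_monoid_add)) = (if a+1 < N then f (a+1) else 0)"
proof -
  have "(\<Sum>k\<in>{0..<N}. if a+1=k then f k else 0) = (\<Sum>k\<in>{0..<N}. if k=a+1 then f k else 0)"
    by (intro sum.cong) auto
  then show ?thesis by simp
qed

lemma HQ_entry:
  assumes N: "N = Suc n" and ab: "a < N" "b < N"
  shows "(BH_H N * BH_Q N) $$ (a,b) = (BH_Q N * jordan_J N) $$ (a,b)"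
proof -
  define q where "q m = BH_Q N $$ (m,b)" for m
  define hd where "hd = \<i> * (2 * of_nat a - of_nat N + 1)"
  define hl where "hl = complex_of_real (sqrt (real (a * (N - a))))"
  define hu where "hu = complex_of_real (sqrt (real ((a+1) * (N - (a+1)))))"
  have s1: "(BH_H N * BH_Q N) $$ (a,b) = (\<Sum>k\<in>{0..<N}. BH_H N $$ (a,k) * q k)"
    using ab by (simp add: dims scalar_prod_def q_def)
  have s2: "BH_H N $$ (a,k) * q k = (if k = a then hd * q a else 0) + (if k+1 = a then hl * q k else 0)
       + (if a+1 = k then hu * q k else 0)" if "k < N" for k
    using ab that unfolding BH_H_def hd_def hl_def hu_def by auto
  have s3: "(BH_H N * BH_Q N) $$ (a,b) = hd * q a + (if 0 < a then hl * q (a-1) else 0)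
       + (if a+1 < N then hu * q (a+1) else 0)"
    unfolding s1 using ab by (simp add: s2 sum.distrib sum_pred' sum_succ)
  have s4: "(BH_Q N * jordan_J N) $$ (a,b) = (if 0 < b then BH_Q N $$ (a, b-1) else 0)"
  proof -
    have "(BH_Q N * jordan_J N) $$ (a,b) = (\<Sum>i\<in>{0..<N}. BH_Q N $$ (a, i) * jordan_J N $$ (i,b))"
      using ab by (simp add: dims scalar_prod_def)
    also have "\<dots> = (\<Sum>i\<in>{0..<N}. if Suc i = b then BH_Q N $$ (a, i) else 0)"
      using ab by (intro sum.cong) (auto simp: jordan_J_def)
    also have "\<dots> = (if 0 < b then BH_Q N $$ (a, b-1) else 0)"
      using ab by (simp add: sum_pred')
    finally show ?thesis .
  qed
  have an: "a \<le> n" using ab N by simp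
  then obtain k where nk: "n = a + k" using le_Suc_ex by blast
  have bn: "b \<le> a + k" using ab N nk by simp
  define s where "s m = complex_of_real (sqrt (real (n choose m)))" for m
  define cb where "cb = (- \<i>) ^ (n - b) * (of_nat (fact (n - b)) :: complex)"
  define T where "T = \<i> ^ a * s a * cb"
  have qm: "q m = \<i> ^ m * s m * of_nat ((n - m) choose b) * cb" if "m < N" for m
    unfolding q_def s_def cb_def using Q_entry[OF that ab(2)] N by simp
  have e1: "hd * q a = T * (\<i> * (2 * of_nat a - of_nat (a+k)) * of_nat (k choose b))"
    unfolding qm[OF ab(1)] T_def hd_def N nk by (simp add: algebra_simps)
  have e2: "(if 0 < a then hl * q (a-1) else 0) = T * (of_nat a * (- \<i>) * of_nat ((k+1) choose b))"
  proof (cases a)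
    case 0 then show ?thesis by simp
  next
    case (Suc a')
    have an': "Suc a' \<le> n" using an Suc by simp
    have r: "sqrt (real (n choose a')) * sqrt (real (Suc a' * (Suc n - Suc a'))) = real (Suc a') * sqrt (real (n choose Suc a'))"
      using sqrt_L[OF zero_less_Suc an'] unfolding diff_Suc_1 .
    have "hl * s a' = complex_of_real (sqrt (real (n choose a')) * sqrt (real (Suc a' * (Suc n - Suc a'))))"
      unfolding hl_def s_def N Suc of_real_mult by (simp only: mult.commute)
    also have "\<dots> = of_nat a * s a" unfolding r s_def Suc of_real_mult by simp
    finally have L: "hl * s a' = of_nat a * s a" .
    have "q a' = \<i> ^ a' * s a' * of_nat ((k+1) choose b) * cb" using qm[of a'] Suc ab nk by simp
    then have "hl * q a' = \<i> ^ a' * (hl * s a') * of_nat ((k+1) choose b) * cb" by (simp add: algebra_simps)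
    also have "\<dots> = \<i> ^ a' * (of_nat a * s a) * of_nat ((k+1) choose b) * cb" by (simp only: L)
    also have "\<dots> = T * (of_nat a * (- \<i>) * of_nat ((k+1) choose b))"
      unfolding T_def Suc by (simp add: algebra_simps)
    finally show ?thesis using Suc by simp
  qed
  have e3: "(if a+1 < N then hu * q (a+1) else 0) = T * (of_nat k * \<i> * of_nat ((k-1) choose b))"
  proof (cases k)
    case 0 then show ?thesis using N nk by simp
  next
    case (Suc k')
    have an1: "a < n" using nk Suc by simp
    have "hu * s (Suc a) = complex_of_real (sqrt (real (n choose Suc a)) * sqrt (real (Suc a * (Suc n - Suc a))))"
      unfolding hu_def s_def N Suc_eq_plus1[symmetric] of_real_mult by (simp only: mult.commute)
    also have "\<dots> = of_nat k * s a" unfolding sqrt_U[OF an1] s_def of_real_mult using nk by simp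
    finally have U: "hu * s (Suc a) = of_nat k * s a" .
    have "q (Suc a) = \<i> ^ Suc a * s (Suc a) * of_nat ((k-1) choose b) * cb" using qm[of "Suc a"] Suc N nk by simp
    then have "hu * q (Suc a) = \<i> ^ Suc a * (hu * s (Suc a)) * of_nat ((k-1) choose b) * cb" by (simp add: algebra_simps)
    also have "\<dots> = \<i> ^ Suc a * (of_nat k * s a) * of_nat ((k-1) choose b) * cb" by (simp only: U)
    also have "\<dots> = T * (of_nat k * \<i> * of_nat ((k-1) choose b))"
      unfolding T_def by (simp add: algebra_simps)
    finally show ?thesis using Suc N nk by simp
  qed
  have e4: "(if 0 < b then BH_Q N $$ (a, b-1) else 0) = T * (if 0<b then -\<i> * of_nat (a+k+1-b) * of_nat (k choose (b-1)) else 0)"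
  proof (cases b)
    case 0 then show ?thesis by simp
  next
    case (Suc b')
    have nb: "n - b' = Suc (n - b)" using Suc ab N by simp
    have "BH_Q N $$ (a, b') = \<i> ^ a * s a * of_nat (k choose b') * ((- \<i>) ^ (n - b') * of_nat (fact (n - b')))"
      using Q_entry[OF ab(1), of b'] Suc ab N nk unfolding s_def by simp
    also have "\<dots> = T * (-\<i> * of_nat (a+k+1-b) * of_nat (k choose b'))"
    proof -
      obtain m where m: "m = n - b" by simp
      have m1: "a+k+1-b = Suc m" using Suc nk ab N m by simp
      have m2: "n - b' = Suc m" using nb m by simp
      have cb': "cb = (- \<i>) ^ m * (of_nat (fact m) :: complex)" unfolding cb_def m ..
      show ?thesis unfolding m2 T_def cb' m1 power_Suc fact_Suc of_nat_mult by (simp add: algebra_simps)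
    qed
    finally show ?thesis using Suc by simp
  qed
  have "hd * q a + (if 0 < a then hl * q (a-1) else 0) + (if a+1 < N then hu * q (a+1) else 0)
     = T * (of_nat a * (-\<i>) * of_nat ((k+1) choose b)
     + \<i>*(2*of_nat a - of_nat (a+k)) * of_nat (k choose b)
     + of_nat k * \<i> * of_nat ((k-1) choose b))"
    unfolding e1 e2 e3 by (simp add: algebra_simps)
  also have "\<dots> = T * (if 0<b then -\<i> * of_nat (a+k+1-b) * of_nat (k choose (b-1)) else 0)"
    by (simp only: core[OF bn])
  finally show ?thesis unfolding s3 s4 e4 .
qed


definition RR :: "nat \<Rightarrow> complex mat" where
  "RR N = mat N N (\<lambda>(r,c). if r + c = N - 1 then 1 else 0)"
definition LL :: "nat \<Rightarrow> complex mat" where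
  "LL N = mat N N (\<lambda>(r,c). of_nat (r choose c))"

lemma RR_carrier: "RR N \<in> carrier_mat N N" by (simp add: RR_def)
lemma LL_carrier: "LL N \<in> carrier_mat N N" by (simp add: LL_def)

lemma P_decomp: "BH_P N = RR N * LL N"
proof (rule eq_matI)
  fix i j assume ij: "i < dim_row (RR N * LL N)" "j < dim_col (RR N * LL N)"
  then have i: "i < N" and j: "j < N" by (auto simp: RR_def LL_def)
  have "(RR N * LL N) $$ (i,j) = (\<Sum>k\<in>{0..<N}. RR N $$ (i,k) * LL N $$ (k,j))"
    using i j by (simp add: scalar_prod_def RR_def LL_def)
  also have "\<dots> = (\<Sum>k\<in>{0..<N}. if k = N - 1 - i then of_nat (k choose j) else 0)"
    using i j by (intro sum.cong) (auto simp: RR_def LL_def)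
  also have "\<dots> = of_nat ((N - 1 - i) choose j)" using i by simp
  finally show "BH_P N $$ (i,j) = (RR N * LL N) $$ (i,j)" using i j by (simp add: BH_P_def)
qed (auto simp: BH_P_def RR_def LL_def)

lemma RR_sq: "RR N * RR N = 1\<^sub>m N"
proof (rule eq_matI)
  fix i j assume ij: "i < dim_row (1\<^sub>m N :: complex mat)" "j < dim_col (1\<^sub>m N :: complex mat)"
  then have i: "i < N" and j: "j < N" by auto
  have "(RR N * RR N) $$ (i,j) = (\<Sum>k\<in>{0..<N}. RR N $$ (i,k) * RR N $$ (k,j))"
    using i j by (simp add: scalar_prod_def RR_def)
  also have "\<dots> = (\<Sum>k\<in>{0..<N}. if k = N - 1 - i then (if i = j then 1 else 0) else 0)"
    using i j by (intro sum.cong) (auto simp: RR_def)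
  also have "\<dots> = (if i = j then 1 else 0)" using i by simp
  finally show "(RR N * RR N) $$ (i,j) = 1\<^sub>m N $$ (i,j)" using i j by simp
qed (auto simp: RR_def)

lemma det_RR: "det (RR N) \<noteq> 0"
proof
  assume "det (RR N) = 0"
  moreover have "det (RR N) * det (RR N) = 1"
    using det_mult[OF RR_carrier RR_carrier, of N] RR_sq[of N] by simp
  ultimately show False by simp
qed

lemma det_LL: "det (LL N) = 1"
proof -
  have "det (LL N) = prod_list (diag_mat (LL N))"
    by (rule det_lower_triangular[OF _ LL_carrier]) (simp add: LL_def)
  also have "diag_mat (LL N) = replicate N 1" by (rule nth_equalityI) (auto simp: diag_mat_def LL_def)
  also have "prod_list (replicate N (1::complex)) = 1" by simp
  finally show ?thesis .
qed

lemma det_D: "det (BH_D N) \<noteq> 0"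
proof -
  have "det (BH_D N) = prod_list (diag_mat (BH_D N))"
    by (rule det_lower_triangular[OF _ carriers(2)]) (simp add: BH_D_def)
  also have "\<dots> \<noteq> 0" by (auto simp: diag_mat_def BH_D_def prod_list_zero_iff)
  finally show ?thesis .
qed

lemma det_G: "det (BH_G N) \<noteq> 0"
proof -
  have "det (BH_G N) = prod_list (diag_mat (BH_G N))"
    by (rule det_lower_triangular[OF _ carriers(3)]) (simp add: BH_G_def)
  also have "\<dots> \<noteq> 0" by (auto simp: diag_mat_def BH_G_def prod_list_zero_iff)
  finally show ?thesis .
qed

lemma det_Q: "det (BH_Q N) \<noteq> 0"
proof -
  have "det (BH_P N) = det (RR N) * det (LL N)" unfolding P_decomp by (rule det_mult[OF RR_carrier LL_carrier])
  then have P: "det (BH_P N) \<noteq> 0" using det_RR det_LL by simp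
  have DP: "BH_D N * BH_P N \<in> carrier_mat N N" using mult_carrier_mat[OF carriers(2) carriers(4)] .
  have "det (BH_Q N) = det (BH_D N) * det (BH_P N) * det (BH_G N)"
    unfolding BH_Q_def det_mult[OF DP carriers(3)] det_mult[OF carriers(2) carriers(4)] ..
  then show ?thesis using P det_D det_G by simp
qed

lemma inv_Q: "invertible_mat (BH_Q N)"
proof -
  have "BH_Q N \<in> Units (ring_mat TYPE(complex) N undefined)"
    by (rule det_non_zero_imp_unit[OF carriers(6) det_Q])
  then obtain B where B: "B \<in> carrier_mat N N" "B * BH_Q N = 1\<^sub>m N" "BH_Q N * B = 1\<^sub>m N"
    unfolding Units_def ring_mat_def by auto
  then show ?thesis unfolding invertible_mat_def inverts_mat_def square_mat.simps
    using carriers(6)[of N] by auto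
qed

theorem mainTheorem1:
  fixes N :: nat
  assumes "N \<ge> 2"
  shows "invertible_mat (BH_Q N) \<and> BH_H N * BH_Q N = BH_Q N * jordan_J N"
proof
  show "invertible_mat (BH_Q N)" by (rule inv_Q)
  obtain n where N: "N = Suc n" using assms by (cases N) auto
  show "BH_H N * BH_Q N = BH_Q N * jordan_J N"
  proof (rule eq_matI)
    fix i j assume ij: "i < dim_row (BH_Q N * jordan_J N)" "j < dim_col (BH_Q N * jordan_J N)"
    have "i < N" "j < N" using ij by (simp_all add: dims)
    then show "(BH_H N * BH_Q N) $$ (i,j) = (BH_Q N * jordan_J N) $$ (i,j)" by (rule HQ_entry[OF N])
  qed (simp_all add: dims)
qed

end
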